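(* Let $A$ be a $p\times p$ positive-semidefinite matrix. Assume $\{\lambda_{\max}(\Sigma_{i,A})\}^2/\mathrm{tr}(\Sigma_{i,A}^2)\to0$ as $p\to\infty$ for $i=1,2$, and $\limsup_{m\to\infty}\{\Delta(A)\}^2/K_1(A)<\infty$. Then $K(A)/K_1(A)=1+o(1)$ as $m\to\infty$.
   Context: Two populations on $\mathbb{R}^p$ have mean vectors $\mu_1,\mu_2$ and positive-definite covariance matrices $\Sigma_1,\Sigma_2$; sample sizes $n_1,n_2\ge4$. $\mu_A=A^{1/2}(\mu_1-\mu_2)$, $\Sigma_{i,A}=A^{1/2}\Sigma_iA^{1/2}$, $\Delta(A)=\|\mu_A\|^2$, $K_1(A)=2\sum_{i=1}^2\mathrm{tr}(\Sigma_{i,A}^2)/\{n_i(n_i-1)\}+4\mathrm{tr}(\Sigma_{1,A}\Sigma_{2,A})/(n_1n_2)$, $K_2(A)=4\sum_{i=1}^2\mu_A^T\Sigma_{i,A}\mu_A/n_i$, $K(A)=K_1(A)+K_2(A)$; $\lambda_{\max}(B)$ is the largest eigenvalue of $B$. Quantities may depend on $p,n_1,n_2$; $m=\min\{p,\min(n_1,n_2)\}$. *)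

theory Defs
  imports "Jordan_Normal_Form.Spectral_Radius" "HOL-Library.Extended_Real" "HOL-Library.Liminf_Limsup"
begin

definition psd_mat :: "nat \<Rightarrow> real mat \<Rightarrow> bool" where
  "psd_mat p B \<longleftrightarrow> B \<in> carrier_mat p p \<and> transpose_mat B = B \<and>
     (\<forall>v \<in> carrier_vec p. v \<bullet> (B *\<^sub>v v) \<ge> 0)"

definition pd_mat :: "nat \<Rightarrow> real mat \<Rightarrow> bool" where
  "pd_mat p B \<longleftrightarrow> B \<in> carrier_mat p p \<and> transpose_mat B = B \<and>
     (\<forall>v \<in> carrier_vec p. v \<noteq> 0\<^sub>v p \<longrightarrow> v \<bullet> (B *\<^sub>v v) > 0)"

definition mat_sqrt :: "real mat \<Rightarrow> real mat" where
  "mat_sqrt A = (SOME B. psd_mat (dim_row A) B \<and> B * B = A)"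

definition mat_trace :: "real mat \<Rightarrow> real" where
  "mat_trace B = (\<Sum>i<dim_row B. B $$ (i, i))"

definition lambda_max :: "real mat \<Rightarrow> real" where
  "lambda_max B = Max (spectrum B)"

definition SigA :: "real mat \<Rightarrow> real mat \<Rightarrow> real mat" where
  "SigA A S = mat_sqrt A * S * mat_sqrt A"

definition muA :: "real mat \<Rightarrow> real vec \<Rightarrow> real vec \<Rightarrow> real vec" where
  "muA A mu1 mu2 = mat_sqrt A *\<^sub>v (mu1 - mu2)"

definition Delta :: "real mat \<Rightarrow> real vec \<Rightarrow> real vec \<Rightarrow> real" where
  "Delta A mu1 mu2 = muA A mu1 mu2 \<bullet> muA A mu1 mu2"

definition K1 :: "real mat \<Rightarrow> real mat \<Rightarrow> real mat \<Rightarrow> nat \<Rightarrow> nat \<Rightarrow> real" where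
  "K1 A S1 S2 n1 n2 =
     2 * (mat_trace (SigA A S1 * SigA A S1) / (real n1 * (real n1 - 1))
        + mat_trace (SigA A S2 * SigA A S2) / (real n2 * (real n2 - 1)))
     + 4 * mat_trace (SigA A S1 * SigA A S2) / (real n1 * real n2)"

definition K2 :: "real mat \<Rightarrow> real mat \<Rightarrow> real mat \<Rightarrow> real vec \<Rightarrow> real vec \<Rightarrow> nat \<Rightarrow> nat \<Rightarrow> real" where
  "K2 A S1 S2 mu1 mu2 n1 n2 =
     4 * (muA A mu1 mu2 \<bullet> (SigA A S1 *\<^sub>v muA A mu1 mu2) / real n1
        + muA A mu1 mu2 \<bullet> (SigA A S2 *\<^sub>v muA A mu1 mu2) / real n2)"

definition KK :: "real mat \<Rightarrow> real mat \<Rightarrow> real mat \<Rightarrow> real vec \<Rightarrow> real vec \<Rightarrow> nat \<Rightarrow> nat \<Rightarrow> real" where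
  "KK A S1 S2 mu1 mu2 n1 n2 = K1 A S1 S2 n1 n2 + K2 A S1 S2 mu1 mu2 n1 n2"

end

theory Submission
  imports Defs
begin



lemma real_sym_eigen_exists:
  fixes M :: "real mat"
  assumes M: "M \<in> carrier_mat n n" and sym: "transpose_mat M = M" and n: "n > 0"
  shows "\<exists>l w. w \<in> carrier_vec n \<and> w \<noteq> 0\<^sub>v n \<and> M *\<^sub>v w = l \<cdot>\<^sub>v w"
proof -
  define Mc where "Mc = map_mat complex_of_real M"
  have Mc: "Mc \<in> carrier_mat n n" using M unfolding Mc_def by auto
  from spectrum_non_empty[OF Mc n] obtain mu where "eigenvalue Mc mu"
    unfolding spectrum_def by auto
  then obtain v where v: "v \<in> carrier_vec n" "v \<noteq> 0\<^sub>v n" "Mc *\<^sub>v v = mu \<cdot>\<^sub>v v"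
    unfolding eigenvalue_def eigenvector_def using Mc by auto
  have symM: "\<And>i j. i < n \<Longrightarrow> j < n \<Longrightarrow> M $$ (j, i) = M $$ (i, j)"
    using sym M by (metis carrier_matD index_transpose_mat(1))
  have eq: "(\<Sum>j<n. complex_of_real (M $$ (i, j)) * v $ j) = mu * v $ i" if i: "i < n" for i
  proof -
    have "(Mc *\<^sub>v v) $ i = (mu \<cdot>\<^sub>v v) $ i" using v(3) by simp
    then show ?thesis using i Mc v(1) M
      by (auto simp: Mc_def scalar_prod_def row_def atLeast0LessThan)
  qed
  define s where "s = (\<Sum>i<n. cnj (v $ i) * (\<Sum>j<n. complex_of_real (M $$ (i, j)) * v $ j))"
  have "s = (\<Sum>i<n. cnj (v $ i) * (mu * v $ i))" unfolding s_def by (rule sum.cong) (simp_all add: eq)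
  also have "\<dots> = mu * (\<Sum>i<n. v $ i * cnj (v $ i))"
    by (simp add: sum_distrib_left mult.commute mult.left_commute)
  finally have s1: "s = mu * (\<Sum>i<n. v $ i * cnj (v $ i))" .
  have "cnj s = (\<Sum>i<n. \<Sum>j<n. v $ i * complex_of_real (M $$ (i, j)) * cnj (v $ j))"
    unfolding s_def by (simp add: sum_distrib_left mult.commute mult.left_commute)
  also have "\<dots> = (\<Sum>j<n. \<Sum>i<n. v $ i * complex_of_real (M $$ (i, j)) * cnj (v $ j))"
    by (rule sum.swap)
  also have "\<dots> = s"
    unfolding s_def by (auto simp: sum_distrib_left symM mult.commute mult.left_commute intro!: sum.cong)
  finally have "cnj s = s" .
  hence ims: "Im s = 0" by (metis Reals_cnj_iff complex_is_Real_iff)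
  define r where "r = (\<Sum>i<n. v $ i * cnj (v $ i))"
  have imr: "Im r = 0" unfolding r_def by (simp add: Im_sum)
  obtain i0 where i0: "i0 < n" "v $ i0 \<noteq> 0"
    using v(1,2) by (metis carrier_vecD eq_vecI index_zero_vec(1,2))
  have rer: "Re r > 0"
  proof -
    have "Re r = (\<Sum>i<n. (Re (v $ i))\<^sup>2 + (Im (v $ i))\<^sup>2)"
      unfolding r_def by (simp add: Re_sum power2_eq_square)
    also have "\<dots> \<ge> (Re (v $ i0))\<^sup>2 + (Im (v $ i0))\<^sup>2"
      by (rule member_le_sum) (use i0 in auto)
    moreover have "(Re (v $ i0))\<^sup>2 + (Im (v $ i0))\<^sup>2 > 0"
      using i0(2) by (simp add: sum_power2_gt_zero_iff complex_eq_iff)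
    ultimately show ?thesis by linarith
  qed
  have immu: "Im mu = 0"
  proof -
    have "Im s = Re mu * Im r + Im mu * Re r" using s1 unfolding r_def[symmetric] by simp
    thus ?thesis using ims imr rer by simp
  qed
  have reeq: "(\<Sum>j<n. M $$ (i, j) * Re (v $ j)) = Re mu * Re (v $ i)" if "i < n" for i
    using arg_cong[OF eq[OF that], of Re] immu by (simp add: Re_sum)
  have imeq: "(\<Sum>j<n. M $$ (i, j) * Im (v $ j)) = Re mu * Im (v $ i)" if "i < n" for i
    using arg_cong[OF eq[OF that], of Im] immu by (simp add: Im_sum)
  have key: "M *\<^sub>v vec n f = Re mu \<cdot>\<^sub>v vec n f"
    if "\<And>i. i < n \<Longrightarrow> (\<Sum>j<n. M $$ (i, j) * f j) = Re mu * f i" for f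
    using that M by (intro eq_vecI) (auto simp: scalar_prod_def row_def atLeast0LessThan)
  show ?thesis
  proof (cases "Re (v $ i0) = 0")
    case True
    hence "Im (v $ i0) \<noteq> 0" using i0(2) complex_eq_iff by auto
    hence "vec n (\<lambda>i. Im (v $ i)) \<noteq> 0\<^sub>v n" using i0(1)
      by (metis index_vec index_zero_vec(1))
    thus ?thesis using key[of "\<lambda>i. Im (v $ i)"] imeq by (intro exI[of _ "Re mu"] exI[of _ "vec n _"]) auto
  next
    case False
    hence "vec n (\<lambda>i. Re (v $ i)) \<noteq> 0\<^sub>v n" using i0(1)
      by (metis index_vec index_zero_vec(1))
    thus ?thesis using key[of "\<lambda>i. Re (v $ i)"] reeq by (intro exI[of _ "Re mu"] exI[of _ "vec n _"]) auto
  qed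
qed

lemma hh_sum:
  fixes x :: "nat \<Rightarrow> real"
  assumes "i < n" "j < n"
  shows "(\<Sum>k<n. ((if i = k then 1 else 0) - a * (x i * x k)) * ((if k = j then 1 else 0) - a * (x k * x j)))
    = (if i = j then 1 else 0) - 2 * a * (x i * x j) + a^2 * (x i * x j) * (\<Sum>k<n. x k * x k)"
proof -
  have pw: "((if i = k then 1 else 0) - a * (x i * x k)) * ((if k = j then 1 else 0) - a * (x k * x j))
     = (if i = k then (if k = j then 1 else 0) else 0) - (if i = k then a * (x k * x j) else 0)
       - (if k = j then a * (x i * x k) else 0) + a^2 * (x i * x j) * (x k * x k)" for k
    by (cases "i = k"; cases "k = j") (simp_all add: algebra_simps power2_eq_square)
  have "(\<Sum>k<n. ((if i = k then 1 else 0) - a * (x i * x k)) * ((if k = j then 1 else 0) - a * (x k * x j)))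
    = (\<Sum>k<n. (if i = k then (if k = j then 1 else 0) else 0)) - (\<Sum>k<n. (if i = k then a * (x k * x j) else 0))
      - (\<Sum>k<n. (if k = j then a * (x i * x k) else 0)) + (\<Sum>k<n. a^2 * (x i * x j) * (x k * x k))"
    by (simp only: pw sum.distrib sum_subtractf)
  also have "\<dots> = (if i = j then 1 else 0) - a * (x i * x j) - a * (x i * x j) + a^2 * (x i * x j) * (\<Sum>k<n. x k * x k)"
    using assms by (simp add: sum_distrib_left)
  also have "\<dots> = (if i = j then 1 else 0) - 2 * a * (x i * x j) + a^2 * (x i * x j) * (\<Sum>k<n. x k * x k)"
    by simp
  finally show ?thesis .
qed

lemma householder:
  fixes u :: "real vec"
  assumes u: "u \<in> carrier_vec n" and uu: "u \<bullet> u = 1" and n: "n > 0"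
  shows "\<exists>H. H \<in> carrier_mat n n \<and> transpose_mat H = H \<and> H * H = 1\<^sub>m n \<and> col H 0 = u"
proof -
  define w where "w = u - unit_vec n 0"
  have w: "w \<in> carrier_vec n" unfolding w_def using u by auto
  have wi: "\<And>i. i < n \<Longrightarrow> w $ i = u $ i - (if i = 0 then 1 else 0)"
    unfolding w_def using u by auto
  define c where "c = (\<Sum>k<n. w $ k * w $ k)"
  have uu': "(\<Sum>k<n. u $ k * u $ k) = 1" using uu u
    by (simp add: scalar_prod_def atLeast0LessThan)
  have c_eq: "c = 2 - 2 * u $ 0"
  proof -
    have "c = (\<Sum>k<n. u $ k * u $ k - (if k = 0 then 2 * u $ k else 0) + (if k = 0 then 1 else 0))"
      unfolding c_def by (rule sum.cong) (auto simp: wi algebra_simps)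
    also have "\<dots> = (\<Sum>k<n. u $ k * u $ k) - (\<Sum>k<n. (if k = 0 then 2 * u $ k else 0)) + (\<Sum>k<n. (if k = 0 then 1 else 0))"
      by (simp only: sum.distrib sum_subtractf)
    also have "\<dots> = 2 - 2 * u $ 0" using n uu' by simp
    finally show ?thesis .
  qed
  show ?thesis
  proof (cases "c = 0")
    case True
    have "w = 0\<^sub>v n"
    proof (rule eq_vecI)
      fix i assume i: "i < dim_vec (0\<^sub>v n)"
      have "w $ i * w $ i \<le> c" unfolding c_def
        by (rule member_le_sum) (use i in auto)
      hence "w $ i * w $ i \<le> 0" using True by simp
      thus "w $ i = 0\<^sub>v n $ i" using i by (simp add: mult_le_0_iff) linarith
    qed (use w in auto)
    hence w0: "\<And>i. i < n \<Longrightarrow> w $ i = 0" by simp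
    have "u = unit_vec n 0"
    proof (rule eq_vecI)
      fix i assume "i < dim_vec (unit_vec n 0)"
      hence i: "i < n" by simp
      show "u $ i = unit_vec n 0 $ i" using wi[OF i] w0[OF i] i by (simp add: unit_vec_def)
    qed (use u in auto)
    thus ?thesis using n by (intro exI[of _ "1\<^sub>m n"]) auto
  next
    case False
    define a where "a = 2 / c"
    define H where "H = mat n n (\<lambda>(i, j). (if i = j then 1 else 0) - a * (w $ i * w $ j))"
    have H: "H \<in> carrier_mat n n" unfolding H_def by auto
    have "transpose_mat H = H" unfolding H_def by (intro eq_matI) auto
    moreover have "H * H = 1\<^sub>m n"
    proof (rule eq_matI)
      fix i j assume ij: "i < dim_row (1\<^sub>m n)" "j < dim_col (1\<^sub>m n)"
      have "(H * H) $$ (i, j) = (\<Sum>k<n. ((if i = k then 1 else 0) - a * (w $ i * w $ k)) * ((if k = j then 1 else 0) - a * (w $ k * w $ j)))"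
        using ij H unfolding H_def by (simp add: scalar_prod_def row_def col_def atLeast0LessThan)
      also have "\<dots> = (if i = j then 1 else 0) - 2 * a * (w $ i * w $ j) + a^2 * (w $ i * w $ j) * c"
        unfolding c_def by (rule hh_sum) (use ij in auto)
      also have "\<dots> = (if i = j then 1 else 0)"
        using False unfolding a_def by (simp add: power2_eq_square field_simps)
      finally show "(H * H) $$ (i, j) = 1\<^sub>m n $$ (i, j)" using ij by simp
    qed (use H in auto)
    moreover have "col H 0 = u"
    proof (rule eq_vecI)
      fix i assume i: "i < dim_vec u"
      hence i': "i < n" using u by auto
      have "a * w $ 0 = -1" unfolding a_def c_eq using wi[OF n] False c_eq
        by (simp add: field_simps)
      hence aw: "a * (w $ i * w $ 0) = - w $ i"
        by (subst mult.left_commute) simp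
      have "H $$ (i, 0) = (if i = 0 then 1 else 0) - a * (w $ i * w $ 0)"
        unfolding H_def using i' n by simp
      hence "H $$ (i, 0) = (if i = 0 then 1 else 0) + w $ i" unfolding aw by simp
      thus "col H 0 $ i = u $ i" using i' n H wi[OF i'] by simp
    qed (use H u in auto)
    ultimately show ?thesis using H by blast
  qed
qed


lemma mult_entry:
  fixes X Y :: "'a::comm_ring_1 mat"
  assumes "X \<in> carrier_mat r n" "Y \<in> carrier_mat n c" "i < r" "j < c"
  shows "(X * Y) $$ (i, j) = (\<Sum>k<n. X $$ (i, k) * Y $$ (k, j))"
  using assms by (simp add: scalar_prod_def row_def col_def atLeast0LessThan)

definition diagm :: "nat \<Rightarrow> (nat \<Rightarrow> real) \<Rightarrow> real mat" where
  "diagm n d = mat n n (\<lambda>(i, j). if i = j then d i else 0)"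

lemma diagm_carrier[simp]: "diagm n d \<in> carrier_mat n n"
  unfolding diagm_def by auto

lemma diagm_dim[simp]: "dim_row (diagm n d) = n" "dim_col (diagm n d) = n"
  unfolding diagm_def by auto

lemma mult_diagm:
  assumes X: "X \<in> carrier_mat r n"
  shows "X * diagm n d = mat r n (\<lambda>(i, j). X $$ (i, j) * d j)"
proof (rule eq_matI)
  fix i j assume ij: "i < dim_row (mat r n (\<lambda>(i, j). X $$ (i, j) * d j))"
    "j < dim_col (mat r n (\<lambda>(i, j). X $$ (i, j) * d j))"
  hence "(X * diagm n d) $$ (i, j) = (\<Sum>k<n. X $$ (i, k) * (if k = j then d k else 0))"
    using X by (subst mult_entry[OF X diagm_carrier]) (auto simp: diagm_def)
  also have "\<dots> = X $$ (i, j) * d j" using ij by (simp add: if_distrib cong: if_cong)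
  finally show "(X * diagm n d) $$ (i, j) = mat r n (\<lambda>(i, j). X $$ (i, j) * d j) $$ (i, j)"
    using ij by simp
qed (use X in auto)

lemma vv_pos:
  fixes v :: "real vec"
  assumes "v \<in> carrier_vec n" "v \<noteq> 0\<^sub>v n"
  shows "v \<bullet> v > 0"
proof -
  obtain i where i: "i < n" "v $ i \<noteq> 0"
    using assms by (metis carrier_vecD eq_vecI index_zero_vec(1,2))
  have "v \<bullet> v = (\<Sum>k<n. v $ k * v $ k)" using assms by (simp add: scalar_prod_def atLeast0LessThan)
  also have "\<dots> \<ge> v $ i * v $ i" by (rule member_le_sum) (use i in auto)
  moreover have "0 < v $ i * v $ i" using i(2)
    by (metis linorder_neqE_linordered_idom mult_neg_neg mult_pos_pos)
  ultimately show ?thesis by linarith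
qed



lemma real_spectral:
  fixes M :: "real mat"
  assumes "M \<in> carrier_mat n n" "transpose_mat M = M"
  shows "\<exists>U d. U \<in> carrier_mat n n \<and> transpose_mat U * U = 1\<^sub>m n \<and> M * U = U * diagm n d"
  using assms
proof (induction n arbitrary: M)
  case 0
  show ?case
    by (intro exI[of _ "1\<^sub>m 0"] exI[of _ "\<lambda>_. 0"]) (use 0 in \<open>auto intro!: eq_matI\<close>)
next
  case (Suc m)
  define n where "n = Suc m"
  have M: "M \<in> carrier_mat n n" and symM: "transpose_mat M = M" using Suc.prems n_def by auto
  have n: "n > 0" unfolding n_def by simp
  obtain l v where v: "v \<in> carrier_vec n" "v \<noteq> 0\<^sub>v n" "M *\<^sub>v v = l \<cdot>\<^sub>v v"
    using real_sym_eigen_exists[OF M symM n] by blast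
  define u where "u = (1 / sqrt (v \<bullet> v)) \<cdot>\<^sub>v v"
  have vv: "v \<bullet> v > 0" using vv_pos v by blast
  have u: "u \<in> carrier_vec n" unfolding u_def using v by auto
  have uu: "u \<bullet> u = 1" unfolding u_def using v vv
    by (simp add: smult_scalar_prod_distrib scalar_prod_smult_distrib[of v n] power2_eq_square[symmetric])
  have Mu: "M *\<^sub>v u = l \<cdot>\<^sub>v u" unfolding u_def using v M
    by (simp add: mult_mat_vec smult_smult_assoc mult.commute)
  obtain H where H: "H \<in> carrier_mat n n" "transpose_mat H = H" "H * H = 1\<^sub>m n" "col H 0 = u"
    using householder[OF u uu n] by blast
  define A' where "A' = H * M * H"
  have A': "A' \<in> carrier_mat n n" unfolding A'_def using H M by auto
  have symA': "transpose_mat A' = A'" unfolding A'_def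
    using H M symM by (simp add: transpose_mult[of _ n n _ n] assoc_mult_mat[of _ n n _ n _ n])
  have Hu: "H *\<^sub>v u = unit_vec n 0"
  proof -
    have "col (H * H) 0 = H *\<^sub>v col H 0" using H n by (intro col_mult2[of _ n n]) auto
    thus ?thesis using H n by simp
  qed
  have colA': "col A' 0 = l \<cdot>\<^sub>v unit_vec n 0"
  proof -
    have "col A' 0 = (H * M) *\<^sub>v col H 0" unfolding A'_def using H M n by (intro col_mult2[of _ n n]) auto
    also have "\<dots> = H *\<^sub>v (M *\<^sub>v u)" using H M u by (simp add: assoc_mult_mat_vec)
    also have "\<dots> = l \<cdot>\<^sub>v (H *\<^sub>v u)" using Mu H u by (simp add: mult_mat_vec)
    finally show ?thesis using Hu by simp
  qed
  have A'c: "A' $$ (i, 0) = (if i = 0 then l else 0)" if "i < n" for i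
    using arg_cong[OF colA', of "\<lambda>x. x $ i"] that A' n by auto
  have A'r: "A' $$ (0, j) = (if j = 0 then l else 0)" if "j < n" for j
    using A'c[OF that] symA' A' that n by (metis carrier_matD index_transpose_mat(1))
  define A3 where "A3 = mat m m (\<lambda>(i, j). A' $$ (Suc i, Suc j))"
  have A3: "A3 \<in> carrier_mat m m" unfolding A3_def by auto
  have symA3: "transpose_mat A3 = A3" unfolding A3_def
    using symA' A' n_def by (intro eq_matI) (auto, metis carrier_matD index_transpose_mat(1) Suc_mono)
  obtain U3 d3 where U3: "U3 \<in> carrier_mat m m" "transpose_mat U3 * U3 = 1\<^sub>m m" "A3 * U3 = U3 * diagm m d3"
    using Suc.IH[OF A3 symA3] by blast
  define V where "V = mat n n (\<lambda>(i, j). if i = 0 then (if j = 0 then 1 else 0) else if j = 0 then 0 else U3 $$ (i - 1, j - 1))"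
  have V: "V \<in> carrier_mat n n" unfolding V_def by auto
  have V00: "V $$ (0, 0) = 1" and V0S: "\<And>j. j < m \<Longrightarrow> V $$ (0, Suc j) = 0"
    and VS0: "\<And>i. i < m \<Longrightarrow> V $$ (Suc i, 0) = 0"
    and VSS: "\<And>i j. i < m \<Longrightarrow> j < m \<Longrightarrow> V $$ (Suc i, Suc j) = U3 $$ (i, j)"
    unfolding V_def n_def by auto
  define d where "d = (\<lambda>i. if i = 0 then l else d3 (i - 1))"
  have VTV: "transpose_mat V * V = 1\<^sub>m n"
  proof (rule eq_matI)
    fix i j assume ij: "i < dim_row (1\<^sub>m n)" "j < dim_col (1\<^sub>m n)"
    hence ij': "i < n" "j < n" by auto
    have e: "(transpose_mat V * V) $$ (i, j) = V $$ (0, i) * V $$ (0, j) + (\<Sum>k<m. V $$ (Suc k, i) * V $$ (Suc k, j))"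
      using ij' V by (subst mult_entry[of _ n n]) (auto simp: n_def sum.lessThan_Suc_shift simp del: sum.lessThan_Suc)
    show "(transpose_mat V * V) $$ (i, j) = 1\<^sub>m n $$ (i, j)"
    proof (cases i)
      case 0
      then show ?thesis using e ij' n_def V00 V0S VS0
        by (cases j) auto
    next
      case (Suc i')
      note i = this
      show ?thesis
      proof (cases j)
        case 0
        then show ?thesis using e ij' n_def V00 V0S VS0 i by auto
      next
        case (Suc j')
        have "(\<Sum>k<m. V $$ (Suc k, i) * V $$ (Suc k, j)) = (\<Sum>k<m. U3 $$ (k, i') * U3 $$ (k, j'))"
          using ij' i Suc n_def VSS by (intro sum.cong) auto
        also have "\<dots> = (transpose_mat U3 * U3) $$ (i', j')"
          using U3 ij' i Suc n_def by (subst mult_entry[of _ m m]) auto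
        also have "\<dots> = (if i' = j' then 1 else 0)" using U3 ij' i Suc n_def by simp
        finally show ?thesis using e ij' i Suc n_def V0S by auto
      qed
    qed
  qed (use V in auto)
  have A'V: "A' * V = V * diagm n d"
  proof (rule eq_matI)
    fix i j assume ij: "i < dim_row (V * diagm n d)" "j < dim_col (V * diagm n d)"
    hence ij': "i < n" "j < n" using V by auto
    have e: "(A' * V) $$ (i, j) = A' $$ (i, 0) * V $$ (0, j) + (\<Sum>k<m. A' $$ (i, Suc k) * V $$ (Suc k, j))"
      using ij' V A' by (subst mult_entry[of _ n n]) (auto simp: n_def sum.lessThan_Suc_shift simp del: sum.lessThan_Suc)
    have r: "(V * diagm n d) $$ (i, j) = V $$ (i, j) * d j" using ij' V by (simp add: mult_diagm)
    show "(A' * V) $$ (i, j) = (V * diagm n d) $$ (i, j)"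
    proof (cases j)
      case 0
      have "(\<Sum>k<m. A' $$ (i, Suc k) * V $$ (Suc k, j)) = 0" using 0 VS0 by simp
      then show ?thesis using e r 0 A'c ij' V00 d_def V_def by auto
    next
      case (Suc j')
      note j = this
      show ?thesis
      proof (cases i)
        case 0
        have "(\<Sum>k<m. A' $$ (i, Suc k) * V $$ (Suc k, j)) = 0" using 0 A'r n_def by simp
        then show ?thesis using e r 0 j ij' V0S n_def A'r by auto
      next
        case (Suc i')
        have "(\<Sum>k<m. A' $$ (i, Suc k) * V $$ (Suc k, j)) = (\<Sum>k<m. A3 $$ (i', k) * U3 $$ (k, j'))"
          using Suc j ij' n_def VSS unfolding A3_def by (intro sum.cong) auto
        also have "\<dots> = (A3 * U3) $$ (i', j')" using A3 U3 Suc j ij' n_def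
          by (subst mult_entry[of _ m m]) auto
        also have "\<dots> = U3 $$ (i', j') * d3 j'" using U3 Suc j ij' n_def by (simp add: mult_diagm)
        finally show ?thesis using e r Suc j ij' n_def VSS VS0 A'c d_def by auto
      qed
    qed
  qed (use V A' in auto)
  define U where "U = H * V"
  have U: "U \<in> carrier_mat n n" unfolding U_def using H V by auto
  have HHX: "H * (H * X) = X" if X: "X \<in> carrier_mat n n" for X
  proof -
    have "H * (H * X) = (H * H) * X" by (rule assoc_mult_mat[OF H(1) H(1) X, symmetric])
    thus ?thesis using H X by simp
  qed
  have HHV: "H * (H * V) = V" using HHX V by blast
  have "transpose_mat U * U = transpose_mat V * (H * (H * V))"
    unfolding U_def using H V by (simp add: transpose_mult[of _ n n _ n] assoc_mult_mat[of _ n n _ n _ n])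
  also have "\<dots> = 1\<^sub>m n" using HHV VTV by simp
  finally have UTU: "transpose_mat U * U = 1\<^sub>m n" .
  have MH: "M * H = H * A'"
  proof -
    have "H * A' = H * (H * (M * H))" unfolding A'_def using H M by (simp add: assoc_mult_mat[of _ n n _ n _ n])
    thus ?thesis using HHX[of "M * H"] H M by simp
  qed
  have "M * U = (M * H) * V" unfolding U_def using H M V by (simp add: assoc_mult_mat[of _ n n _ n _ n])
  also have "\<dots> = H * (A' * V)" unfolding MH using H A' V by (simp add: assoc_mult_mat[of _ n n _ n _ n])
  also have "\<dots> = U * diagm n d" unfolding A'V U_def using H V by (simp add: assoc_mult_mat[of _ n n _ n _ n])
  finally show ?case using U UTU unfolding n_def by blast
qed



lemma diagm_mult_vec:
  assumes y: "y \<in> carrier_vec n"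
  shows "diagm n d *\<^sub>v y = vec n (\<lambda>i. d i * y $ i)"
proof (rule eq_vecI)
  fix i assume i: "i < dim_vec (vec n (\<lambda>i. d i * y $ i))"
  hence "(diagm n d *\<^sub>v y) $ i = (\<Sum>k<n. (if i = k then d i else 0) * y $ k)"
    using y by (simp add: diagm_def scalar_prod_def row_def atLeast0LessThan)
  also have "\<dots> = (\<Sum>k<n. if k = i then d i * y $ i else 0)" by (rule sum.cong) auto
  also have "\<dots> = d i * y $ i" using i by simp
  finally show "(diagm n d *\<^sub>v y) $ i = vec n (\<lambda>i. d i * y $ i) $ i" using i by simp
qed (use y in auto)

lemma quad_form_UDU:
  fixes U :: "real mat"
  assumes U: "U \<in> carrier_mat n n" and x: "x \<in> carrier_vec n"
  shows "x \<bullet> ((U * diagm n d * transpose_mat U) *\<^sub>v x)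
     = (\<Sum>i<n. d i * ((transpose_mat U *\<^sub>v x) $ i)^2)"
proof -
  define y where "y = transpose_mat U *\<^sub>v x"
  have y: "y \<in> carrier_vec n" unfolding y_def using U x by auto
  have "(U * diagm n d * transpose_mat U) *\<^sub>v x = U *\<^sub>v (diagm n d *\<^sub>v y)"
    unfolding y_def using U x by (simp add: assoc_mult_mat_vec[of _ n n _ n])
  hence "x \<bullet> ((U * diagm n d * transpose_mat U) *\<^sub>v x) = x \<bullet> (U *\<^sub>v (diagm n d *\<^sub>v y))" by simp
  also have "\<dots> = (transpose_mat U *\<^sub>v x) \<bullet> (diagm n d *\<^sub>v y)"
  proof -
    have Dy: "diagm n d *\<^sub>v y \<in> carrier_vec n" using y by (intro mult_mat_vec_carrier) auto
    show ?thesis using transpose_vec_mult_scalar[OF U Dy x] by simp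
  qed
  also have "\<dots> = y \<bullet> (diagm n d *\<^sub>v y)" unfolding y_def ..
  also have "\<dots> = (\<Sum>i<n. d i * (y $ i)^2)"
    using y by (simp add: diagm_mult_vec scalar_prod_def atLeast0LessThan power2_eq_square mult.commute mult.left_commute)
  finally show ?thesis unfolding y_def .
qed

lemma spectral_full:
  fixes M :: "real mat"
  assumes M: "M \<in> carrier_mat n n" and sym: "transpose_mat M = M"
  shows "\<exists>U d. U \<in> carrier_mat n n \<and> transpose_mat U * U = 1\<^sub>m n \<and> U * transpose_mat U = 1\<^sub>m n
     \<and> M = U * diagm n d * transpose_mat U \<and> (\<forall>i<n. eigenvalue M (d i))"
proof -
  obtain U d where U: "U \<in> carrier_mat n n" "transpose_mat U * U = 1\<^sub>m n" "M * U = U * diagm n d"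
    using real_spectral[OF M sym] by blast
  have UUT: "U * transpose_mat U = 1\<^sub>m n"
    using mat_mult_left_right_inverse[of "transpose_mat U" n U] U by auto
  have "M = M * (U * transpose_mat U)" using M UUT by simp
  also have "\<dots> = (M * U) * transpose_mat U"
    using U by (intro assoc_mult_mat[OF M U(1), symmetric]) auto
  also have "\<dots> = U * diagm n d * transpose_mat U" using U by simp
  finally have Meq: "M = U * diagm n d * transpose_mat U" .
  have ev: "eigenvalue M (d i)" if i: "i < n" for i
  proof -
    have "col U i \<bullet> col U i = (transpose_mat U * U) $$ (i, i)"
      using U(1) i by (simp add: row_transpose)
    also have "\<dots> = 1" using U(2) i by simp
    finally have c1: "col U i \<bullet> col U i = 1" .
    have cne: "col U i \<noteq> 0\<^sub>v n"
    proof
      assume "col U i = 0\<^sub>v n" thus False using c1 by simp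
    qed
    have "M *\<^sub>v col U i = col (M * U) i" by (rule col_mult2[OF M U(1) i, symmetric])
    also have "\<dots> = col (U * diagm n d) i" using U by simp
    also have "\<dots> = d i \<cdot>\<^sub>v col U i"
      using U i by (intro eq_vecI) (auto simp: mult_diagm)
    finally show ?thesis unfolding eigenvalue_def eigenvector_def using cne U M by (intro exI[of _ "col U i"]) auto
  qed
  show ?thesis using U UUT Meq ev by blast
qed

lemma rayleigh:
  fixes M :: "real mat"
  assumes M: "M \<in> carrier_mat n n" and sym: "transpose_mat M = M" and x: "x \<in> carrier_vec n"
  shows "x \<bullet> (M *\<^sub>v x) \<le> lambda_max M * (x \<bullet> x)"
proof -
  obtain U d where U: "U \<in> carrier_mat n n" "transpose_mat U * U = 1\<^sub>m n" "U * transpose_mat U = 1\<^sub>m n"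
     "M = U * diagm n d * transpose_mat U" "\<forall>i<n. eigenvalue M (d i)"
    using spectral_full[OF M sym] by blast
  have fin: "finite (spectrum M)" using card_finite_spectrum(1)[OF M] .
  have dle: "d i \<le> lambda_max M" if "i < n" for i
    unfolding lambda_max_def using U(5) that fin by (intro Max_ge) (auto simp: spectrum_def)
  have "x \<bullet> x = x \<bullet> ((U * diagm n (\<lambda>_. 1) * transpose_mat U) *\<^sub>v x)"
  proof -
    have "U * diagm n (\<lambda>_. 1) = U" using U by (intro eq_matI) (auto simp: mult_diagm)
    thus ?thesis using U x by simp
  qed
  also have "\<dots> = (\<Sum>i<n. ((transpose_mat U *\<^sub>v x) $ i)^2)" using quad_form_UDU[OF U(1) x] by simp
  finally have xx: "x \<bullet> x = (\<Sum>i<n. ((transpose_mat U *\<^sub>v x) $ i)^2)" .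
  have "x \<bullet> (M *\<^sub>v x) = (\<Sum>i<n. d i * ((transpose_mat U *\<^sub>v x) $ i)^2)"
    using quad_form_UDU[OF U(1) x] U(4) by simp
  also have "\<dots> \<le> (\<Sum>i<n. lambda_max M * ((transpose_mat U *\<^sub>v x) $ i)^2)"
    by (intro sum_mono mult_right_mono) (auto simp: dle)
  also have "\<dots> = lambda_max M * (x \<bullet> x)" unfolding xx by (simp add: sum_distrib_left)
  finally show ?thesis .
qed

lemma psd_sqrt_exists:
  assumes P: "psd_mat n M"
  shows "\<exists>B. psd_mat n B \<and> B * B = M"
proof -
  have M: "M \<in> carrier_mat n n" and sym: "transpose_mat M = M"
    and pos: "\<And>v. v \<in> carrier_vec n \<Longrightarrow> v \<bullet> (M *\<^sub>v v) \<ge> 0"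
    using P unfolding psd_mat_def by auto
  obtain U d where U: "U \<in> carrier_mat n n" "transpose_mat U * U = 1\<^sub>m n" "U * transpose_mat U = 1\<^sub>m n"
     "M = U * diagm n d * transpose_mat U" "\<forall>i<n. eigenvalue M (d i)"
    using spectral_full[OF M sym] by blast
  have dpos: "d i \<ge> 0" if i: "i < n" for i
  proof -
    obtain v where v: "v \<in> carrier_vec n" "v \<noteq> 0\<^sub>v n" "M *\<^sub>v v = d i \<cdot>\<^sub>v v"
      using U(5) i M unfolding eigenvalue_def eigenvector_def by auto
    have "0 \<le> v \<bullet> (M *\<^sub>v v)" using pos[OF v(1)] .
    also have "\<dots> = d i * (v \<bullet> v)" using v by (simp add: scalar_prod_smult_right)
    finally show ?thesis using vv_pos[OF v(1,2)] by (simp add: zero_le_mult_iff)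
  qed
  define B where "B = U * diagm n (\<lambda>i. sqrt (d i)) * transpose_mat U"
  have B: "B \<in> carrier_mat n n" unfolding B_def using U by auto
  have tD: "transpose_mat (diagm n f) = diagm n f" for f
    unfolding diagm_def by (intro eq_matI) auto
  have symB: "transpose_mat B = B"
  proof -
    define Dg where "Dg = diagm n (\<lambda>i. sqrt (d i))"
    have Dg: "Dg \<in> carrier_mat n n" unfolding Dg_def by simp
    have Ut: "transpose_mat U \<in> carrier_mat n n" using U by simp
    have "transpose_mat (U * Dg * transpose_mat U) = transpose_mat (transpose_mat U) * transpose_mat (U * Dg)"
      by (rule transpose_mult[of _ n n _ n]) (use U Dg in auto)
    also have "transpose_mat (U * Dg) = transpose_mat Dg * transpose_mat U"
      by (rule transpose_mult[of _ n n _ n]) (use U Dg in auto)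
    also have "transpose_mat Dg = Dg" unfolding Dg_def by (rule tD)
    finally have "transpose_mat (U * Dg * transpose_mat U) = U * (Dg * transpose_mat U)" by simp
    also have "\<dots> = U * Dg * transpose_mat U" by (rule assoc_mult_mat[OF U(1) Dg Ut, symmetric])
    finally show ?thesis unfolding B_def Dg_def .
  qed
  have DD: "diagm n f * diagm n g = diagm n (\<lambda>i. f i * g i)" for f g
    unfolding mult_diagm[OF diagm_carrier] by (auto simp: diagm_def intro!: eq_matI)
  have UTUZ: "transpose_mat U * (U * Z) = Z" if Z: "Z \<in> carrier_mat n n" for Z
  proof -
    have "transpose_mat U * (U * Z) = (transpose_mat U * U) * Z"
      by (rule assoc_mult_mat[symmetric]) (use U Z in auto)
    thus ?thesis using U Z by simp
  qed
  have "B * B = U * (diagm n (\<lambda>i. sqrt (d i)) * diagm n (\<lambda>i. sqrt (d i))) * transpose_mat U"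
  proof -
    define Dg where "Dg = diagm n (\<lambda>i. sqrt (d i))"
    have Dg: "Dg \<in> carrier_mat n n" unfolding Dg_def by simp
    have Ut: "transpose_mat U \<in> carrier_mat n n" using U by simp
    have UD: "U * Dg \<in> carrier_mat n n" using U Dg by simp
    have DU: "Dg * transpose_mat U \<in> carrier_mat n n" using Ut Dg by simp
    have e1: "U * Dg * transpose_mat U = U * (Dg * transpose_mat U)" by (rule assoc_mult_mat[OF U(1) Dg Ut])
    have "B * B = (U * Dg) * (transpose_mat U * (U * (Dg * transpose_mat U)))"
      unfolding B_def Dg_def[symmetric] e1[symmetric]
      by (rule assoc_mult_mat[OF UD Ut]) (use U Dg Ut in auto)
    also have "\<dots> = (U * Dg) * (Dg * transpose_mat U)" using UTUZ[OF DU] by simp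
    also have "\<dots> = U * (Dg * (Dg * transpose_mat U))" by (rule assoc_mult_mat[OF U(1) Dg DU])
    also have "Dg * (Dg * transpose_mat U) = (Dg * Dg) * transpose_mat U"
      by (rule assoc_mult_mat[OF Dg Dg Ut, symmetric])
    also have "U * ((Dg * Dg) * transpose_mat U) = U * (Dg * Dg) * transpose_mat U"
      by (rule assoc_mult_mat[OF U(1) _ Ut, symmetric]) (use Dg in simp)
    finally show ?thesis unfolding Dg_def .
  qed
  also have "diagm n (\<lambda>i. sqrt (d i)) * diagm n (\<lambda>i. sqrt (d i)) = diagm n d"
  proof -
    have "diagm n (\<lambda>i. sqrt (d i) * sqrt (d i)) = diagm n d"
      unfolding diagm_def using dpos by (intro eq_matI) auto
    thus ?thesis using DD[of "\<lambda>i. sqrt (d i)" "\<lambda>i. sqrt (d i)"] by simp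
  qed
  finally have BB: "B * B = M" using U(4) by simp
  have "v \<bullet> (B *\<^sub>v v) \<ge> 0" if v: "v \<in> carrier_vec n" for v
    unfolding B_def quad_form_UDU[OF U(1) v] using dpos by (intro sum_nonneg) auto
  thus ?thesis using B symB BB unfolding psd_mat_def by blast
qed

lemma mat_trace_comm:
  fixes X Y :: "real mat"
  assumes X: "X \<in> carrier_mat n n" and Y: "Y \<in> carrier_mat n n"
  shows "mat_trace (X * Y) = mat_trace (Y * X)"
proof -
  have tr: "mat_trace (A * B) = (\<Sum>i<n. \<Sum>k<n. A $$ (i, k) * B $$ (k, i))"
    if A: "A \<in> carrier_mat n n" and B: "B \<in> carrier_mat n n" for A B :: "real mat"
  proof -
    have "mat_trace (A * B) = (\<Sum>i<n. (A * B) $$ (i, i))" unfolding mat_trace_def using A by simp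
    also have "\<dots> = (\<Sum>i<n. \<Sum>k<n. A $$ (i, k) * B $$ (k, i))"
      by (rule sum.cong[OF refl], rule mult_entry[OF A B]) auto
    finally show ?thesis .
  qed
  have "mat_trace (X * Y) = (\<Sum>i<n. \<Sum>k<n. X $$ (i, k) * Y $$ (k, i))" using tr[OF X Y] .
  also have "\<dots> = (\<Sum>k<n. \<Sum>i<n. Y $$ (k, i) * X $$ (i, k))" by (subst sum.swap) (simp add: mult.commute)
  also have "\<dots> = mat_trace (Y * X)" using tr[OF Y X] by simp
  finally show ?thesis .
qed

lemma trace_psd_nonneg:
  assumes P: "psd_mat n P" and Q: "psd_mat n Q"
  shows "mat_trace (P * Q) \<ge> 0"
proof -
  obtain R where R: "psd_mat n R" "R * R = P" using psd_sqrt_exists[OF P] by blast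
  have Rc: "R \<in> carrier_mat n n" and symR: "transpose_mat R = R" using R unfolding psd_mat_def by auto
  have Qc: "Q \<in> carrier_mat n n" and Qpos: "\<And>v. v \<in> carrier_vec n \<Longrightarrow> v \<bullet> (Q *\<^sub>v v) \<ge> 0"
    using Q unfolding psd_mat_def by auto
  have "P * Q = R * (R * Q)" using R(2) Rc Qc by (simp add: assoc_mult_mat[of _ n n _ n _ n, symmetric])
  hence "mat_trace (P * Q) = mat_trace ((R * Q) * R)"
    using mat_trace_comm[of R n "R * Q"] Rc Qc by simp
  also have "\<dots> = (\<Sum>i<n. col R i \<bullet> (Q *\<^sub>v col R i))"
  proof -
    have "((R * Q) * R) $$ (i, i) = col R i \<bullet> (Q *\<^sub>v col R i)" if i: "i < n" for i
    proof -
      have "((R * Q) * R) = R * (Q * R)" using Rc Qc by (simp add: assoc_mult_mat[of _ n n _ n _ n])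
      hence "((R * Q) * R) $$ (i, i) = row R i \<bullet> col (Q * R) i" using Rc Qc i by simp
      also have "row R i = col R i"
        using col_transpose[of i R] symR Rc i by simp
      also have "col (Q * R) i = Q *\<^sub>v col R i" by (rule col_mult2[OF Qc Rc i])
      finally show ?thesis .
    qed
    thus ?thesis unfolding mat_trace_def using Rc Qc by simp
  qed
  also have "\<dots> \<ge> 0" using Qpos Rc by (intro sum_nonneg) auto
  finally show ?thesis .
qed


lemma key_ineq:
  fixes a b c N1 N2 D q1 q2 l1 l2 kA kB :: real
  assumes a: "a > 0" and b: "b > 0" and c: "c \<ge> 0" and N1: "N1 \<ge> 4" and N2: "N2 \<ge> 4"
    and D: "D \<ge> 0" and q1: "0 \<le> q1" "q1 \<le> l1 * D" and q2: "0 \<le> q2" "q2 \<le> l2 * D"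
    and kA: "kA = 2 * (a / (N1 * (N1 - 1)) + b / (N2 * (N2 - 1))) + 4 * c / (N1 * N2)"
    and kB: "kB = 4 * (q1 / N1 + q2 / N2)"
  shows "kA > 0" "kB / kA \<ge> 0" "(kB / kA)^2 \<le> 16 * (l1^2 / a + l2^2 / b) * (D^2 / kA)"
proof -
  have t1: "a / (N1 * (N1 - 1)) \<ge> a / N1^2"
    using a N1 by (intro divide_left_mono) (auto simp: power2_eq_square mult_pos_pos)
  have t2: "b / (N2 * (N2 - 1)) \<ge> b / N2^2"
    using b N2 by (intro divide_left_mono) (auto simp: power2_eq_square mult_pos_pos)
  have t3: "4 * c / (N1 * N2) \<ge> 0" using c N1 N2 by simp
  have pa: "a / N1^2 > 0" using a N1 by simp
  have pb: "b / N2^2 > 0" using b N2 by simp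
  have gen: "2 * X' \<le> 2 * (X + Y) + Z \<and> 2 * Y' \<le> 2 * (X + Y) + Z"
    if "X' \<le> X" "Y' \<le> Y" "0 \<le> Z" "0 < Y'" "0 < X'" for X Y Z X' Y' :: real
    using that unfolding distrib_left by linarith
  have kAa: "kA \<ge> 2 * (a / N1^2)" and K1b: "kA \<ge> 2 * (b / N2^2)"
    unfolding kA using gen[OF t1 t2 t3 pb pa] by auto
  show K1pos: "kA > 0" using kAa pa by linarith
  have K2nn: "kB \<ge> 0" unfolding kB using q1 q2 N1 N2 by simp
  show "kB / kA \<ge> 0" using K2nn K1pos by simp
  define x where "x = q1 / N1"
  define y where "y = q2 / N2"
  have l1D: "l1 * D \<ge> 0" and l2D: "l2 * D \<ge> 0" using q1 q2 by auto
  have x2: "x^2 \<le> (l1^2 / a) * D^2 * (a / N1^2)"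
  proof -
    have "x^2 = q1^2 / N1^2" unfolding x_def by (simp add: power_divide)
    also have "\<dots> \<le> (l1 * D)^2 / N1^2"
      using q1 by (intro divide_right_mono power_mono) auto
    also have "\<dots> = (l1^2 / a) * D^2 * (a / N1^2)" using a by (simp add: power_mult_distrib)
    finally show ?thesis .
  qed
  have y2: "y^2 \<le> (l2^2 / b) * D^2 * (b / N2^2)"
  proof -
    have "y^2 = q2^2 / N2^2" unfolding y_def by (simp add: power_divide)
    also have "\<dots> \<le> (l2 * D)^2 / N2^2"
      using q2 by (intro divide_right_mono power_mono) auto
    also have "\<dots> = (l2^2 / b) * D^2 * (b / N2^2)" using b by (simp add: power_mult_distrib)
    finally show ?thesis .
  qed
  have r1: "l1^2 / a \<ge> 0" and r2: "l2^2 / b \<ge> 0" using a b by auto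
  have ha: "a / N1^2 \<le> kA / 2" using kAa by linarith
  have hb: "b / N2^2 \<le> kA / 2" using K1b by linarith
  have "(l1^2 / a) * D^2 * (a / N1^2) \<le> (l1^2 / a) * D^2 * (kA / 2)"
    by (rule mult_left_mono[OF ha]) (use r1 in \<open>intro mult_nonneg_nonneg, auto\<close>)
  with x2 have x2': "x^2 \<le> (l1^2 / a) * D^2 * (kA / 2)" by (rule order_trans)
  have "(l2^2 / b) * D^2 * (b / N2^2) \<le> (l2^2 / b) * D^2 * (kA / 2)"
    by (rule mult_left_mono[OF hb]) (use r2 in \<open>intro mult_nonneg_nonneg, auto\<close>)
  with y2 have y2': "y^2 \<le> (l2^2 / b) * D^2 * (kA / 2)" by (rule order_trans)
  have e1: "kB^2 = 16 * (x + y)^2"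
    unfolding kB x_def[symmetric] y_def[symmetric] by (simp add: power2_eq_square algebra_simps)
  have e2: "(x + y)^2 + (x - y)^2 = 2 * (x^2 + y^2)" by (simp add: power2_eq_square algebra_simps)
  have e3: "(x - y)^2 \<ge> 0" by simp
  have "kB^2 \<le> 32 * (x^2 + y^2)" using e1 e2 e3 by linarith
  also have "\<dots> \<le> 16 * (l1^2 / a + l2^2 / b) * D^2 * kA"
  proof -
    have e: "32 * ((l1^2 / a) * D^2 * (kA / 2) + (l2^2 / b) * D^2 * (kA / 2)) = 16 * (l1^2 / a + l2^2 / b) * D^2 * kA"
      by (simp add: algebra_simps)
    have "32 * (x^2 + y^2) \<le> 32 * ((l1^2 / a) * D^2 * (kA / 2) + (l2^2 / b) * D^2 * (kA / 2))"
      by (intro mult_left_mono add_mono x2' y2') auto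
    thus ?thesis unfolding e .
  qed
  finally have "kB^2 \<le> 16 * (l1^2 / a + l2^2 / b) * D^2 * kA" .
  hence "kB^2 / kA^2 \<le> 16 * (l1^2 / a + l2^2 / b) * D^2 * kA / kA^2"
    using K1pos by (intro divide_right_mono) auto
  also have "\<dots> = 16 * (l1^2 / a + l2^2 / b) * (D^2 / kA)"
    using K1pos by (simp add: power2_eq_square)
  finally show "(kB / kA)^2 \<le> 16 * (l1^2 / a + l2^2 / b) * (D^2 / kA)"
    by (simp add: power_divide)
qed

lemma vv_nonneg: fixes v :: "real vec" shows "v \<bullet> v \<ge> 0"
  unfolding scalar_prod_def by (intro sum_nonneg) auto

lemma pd_psd: assumes "pd_mat n S" shows "psd_mat n S"
proof -
  have S: "S \<in> carrier_mat n n" and "transpose_mat S = S"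
    and pos: "\<And>v. v \<in> carrier_vec n \<Longrightarrow> v \<noteq> 0\<^sub>v n \<Longrightarrow> v \<bullet> (S *\<^sub>v v) > 0"
    using assms unfolding pd_mat_def by auto
  moreover have "v \<bullet> (S *\<^sub>v v) \<ge> 0" if v: "v \<in> carrier_vec n" for v
  proof (cases "v = 0\<^sub>v n")
    case True thus ?thesis using S by simp
  next
    case False thus ?thesis using pos[OF v] by simp
  qed
  ultimately show ?thesis unfolding psd_mat_def by blast
qed

lemma psd_conj:
  assumes B: "psd_mat n B" and S: "psd_mat n S"
  shows "psd_mat n (B * S * B)"
proof -
  have Bc: "B \<in> carrier_mat n n" and symB: "transpose_mat B = B"
    using B unfolding psd_mat_def by auto
  have Sc: "S \<in> carrier_mat n n" and symS: "transpose_mat S = S"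
    and Spos: "\<And>v. v \<in> carrier_vec n \<Longrightarrow> v \<bullet> (S *\<^sub>v v) \<ge> 0"
    using S unfolding psd_mat_def by auto
  have BS: "B * S \<in> carrier_mat n n" using Bc Sc by simp
  have c: "B * S * B \<in> carrier_mat n n" using Bc Sc by simp
  have "transpose_mat (B * S * B) = transpose_mat B * transpose_mat (B * S)"
    by (rule transpose_mult[OF BS Bc])
  also have "transpose_mat (B * S) = transpose_mat S * transpose_mat B"
    by (rule transpose_mult[OF Bc Sc])
  finally have "transpose_mat (B * S * B) = B * (S * B)" using symB symS by simp
  also have "\<dots> = B * S * B" by (rule assoc_mult_mat[OF Bc Sc Bc, symmetric])
  finally have sym: "transpose_mat (B * S * B) = B * S * B" .
  have "v \<bullet> ((B * S * B) *\<^sub>v v) \<ge> 0" if v: "v \<in> carrier_vec n" for v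
  proof -
    have Bv: "B *\<^sub>v v \<in> carrier_vec n" using Bc v by simp
    have SBv: "S *\<^sub>v (B *\<^sub>v v) \<in> carrier_vec n" using Sc Bv by simp
    have "(B * S * B) *\<^sub>v v = B *\<^sub>v (S *\<^sub>v (B *\<^sub>v v))"
      using Bc Sc v by (simp add: assoc_mult_mat_vec[of _ n n _ n])
    hence "v \<bullet> ((B * S * B) *\<^sub>v v) = v \<bullet> (B *\<^sub>v (S *\<^sub>v (B *\<^sub>v v)))" by simp
    also have "\<dots> = (transpose_mat B *\<^sub>v v) \<bullet> (S *\<^sub>v (B *\<^sub>v v))"
      using transpose_vec_mult_scalar[OF Bc SBv v] by simp
    also have "\<dots> = (B *\<^sub>v v) \<bullet> (S *\<^sub>v (B *\<^sub>v v))" using symB by simp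
    also have "\<dots> \<ge> 0" by (rule Spos[OF Bv])
    finally show ?thesis .
  qed
  thus ?thesis using c sym unfolding psd_mat_def by blast
qed

lemma mat_sqrt_props:
  assumes A: "psd_mat n A"
  shows "psd_mat n (mat_sqrt A) \<and> mat_sqrt A * mat_sqrt A = A"
proof -
  have "dim_row A = n" using A unfolding psd_mat_def by auto
  thus ?thesis unfolding mat_sqrt_def using someI_ex[OF psd_sqrt_exists[OF A]] by simp
qed

theorem lemma1:
  fixes p n1 n2 :: "nat \<Rightarrow> nat"
    and A S1 S2 :: "nat \<Rightarrow> real mat"
    and mu1 mu2 :: "nat \<Rightarrow> real vec"
  assumes psdA: "\<And>k. psd_mat (p k) (A k)"
    and pd1: "\<And>k. pd_mat (p k) (S1 k)"
    and pd2: "\<And>k. pd_mat (p k) (S2 k)"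
    and mu1: "\<And>k. mu1 k \<in> carrier_vec (p k)"
    and mu2: "\<And>k. mu2 k \<in> carrier_vec (p k)"
    and n1: "\<And>k. n1 k \<ge> 4"
    and n2: "\<And>k. n2 k \<ge> 4"
    and m_lim: "filterlim (\<lambda>k. min (p k) (min (n1 k) (n2 k))) at_top sequentially"
    and tr1_pos: "\<And>k. mat_trace (SigA (A k) (S1 k) * SigA (A k) (S1 k)) > 0"
    and tr2_pos: "\<And>k. mat_trace (SigA (A k) (S2 k) * SigA (A k) (S2 k)) > 0"
    and lam1: "(\<lambda>k. (lambda_max (SigA (A k) (S1 k)))\<^sup>2
                   / mat_trace (SigA (A k) (S1 k) * SigA (A k) (S1 k))) \<longlonglongrightarrow> 0"
    and lam2: "(\<lambda>k. (lambda_max (SigA (A k) (S2 k)))\<^sup>2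
                   / mat_trace (SigA (A k) (S2 k) * SigA (A k) (S2 k))) \<longlonglongrightarrow> 0"
    and limsup_fin: "limsup (\<lambda>k. ereal ((Delta (A k) (mu1 k) (mu2 k))\<^sup>2
                   / K1 (A k) (S1 k) (S2 k) (n1 k) (n2 k))) < \<infinity>"
  shows "(\<lambda>k. KK (A k) (S1 k) (S2 k) (mu1 k) (mu2 k) (n1 k) (n2 k)
              / K1 (A k) (S1 k) (S2 k) (n1 k) (n2 k)) \<longlonglongrightarrow> 1"
proof -
  define Sg1 where "Sg1 k = SigA (A k) (S1 k)" for k
  define Sg2 where "Sg2 k = SigA (A k) (S2 k)" for k
  define mu where "mu k = muA (A k) (mu1 k) (mu2 k)" for k
  define r1 where "r1 k = (lambda_max (Sg1 k))\<^sup>2 / mat_trace (Sg1 k * Sg1 k)" for k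
  define r2 where "r2 k = (lambda_max (Sg2 k))\<^sup>2 / mat_trace (Sg2 k * Sg2 k)" for k
  define k1 where "k1 k = K1 (A k) (S1 k) (S2 k) (n1 k) (n2 k)" for k
  define k2 where "k2 k = K2 (A k) (S1 k) (S2 k) (mu1 k) (mu2 k) (n1 k) (n2 k)" for k
  define dd where "dd k = Delta (A k) (mu1 k) (mu2 k)" for k
  have per_k: "k1 k > 0 \<and> k2 k / k1 k \<ge> 0 \<and> (k2 k / k1 k)^2 \<le> 16 * (r1 k + r2 k) * ((dd k)^2 / k1 k)
      \<and> r1 k \<ge> 0 \<and> r2 k \<ge> 0" for k
  proof -
    let ?n = "p k"
    have sq: "psd_mat ?n (mat_sqrt (A k))" using mat_sqrt_props[OF psdA] by blast
    have P1: "psd_mat ?n (Sg1 k)" unfolding Sg1_def SigA_def by (rule psd_conj[OF sq pd_psd[OF pd1]])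
    have P2: "psd_mat ?n (Sg2 k)" unfolding Sg2_def SigA_def by (rule psd_conj[OF sq pd_psd[OF pd2]])
    have c1: "Sg1 k \<in> carrier_mat ?n ?n" "transpose_mat (Sg1 k) = Sg1 k"
      and pos1: "\<And>v. v \<in> carrier_vec ?n \<Longrightarrow> v \<bullet> (Sg1 k *\<^sub>v v) \<ge> 0"
      using P1 unfolding psd_mat_def by auto
    have c2: "Sg2 k \<in> carrier_mat ?n ?n" "transpose_mat (Sg2 k) = Sg2 k"
      and pos2: "\<And>v. v \<in> carrier_vec ?n \<Longrightarrow> v \<bullet> (Sg2 k *\<^sub>v v) \<ge> 0"
      using P2 unfolding psd_mat_def by auto
    have muc: "mu k \<in> carrier_vec ?n" unfolding mu_def muA_def
      using sq mu1[of k] mu2[of k] unfolding psd_mat_def by auto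
    have a: "mat_trace (Sg1 k * Sg1 k) > 0" using tr1_pos unfolding Sg1_def by blast
    have b: "mat_trace (Sg2 k * Sg2 k) > 0" using tr2_pos unfolding Sg2_def by blast
    have c: "mat_trace (Sg1 k * Sg2 k) \<ge> 0" by (rule trace_psd_nonneg[OF P1 P2])
    have D: "mu k \<bullet> mu k \<ge> 0" by (rule vv_nonneg)
    have q1: "0 \<le> mu k \<bullet> (Sg1 k *\<^sub>v mu k)" "mu k \<bullet> (Sg1 k *\<^sub>v mu k) \<le> lambda_max (Sg1 k) * (mu k \<bullet> mu k)"
      using pos1[OF muc] rayleigh[OF c1 muc] by auto
    have q2: "0 \<le> mu k \<bullet> (Sg2 k *\<^sub>v mu k)" "mu k \<bullet> (Sg2 k *\<^sub>v mu k) \<le> lambda_max (Sg2 k) * (mu k \<bullet> mu k)"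
      using pos2[OF muc] rayleigh[OF c2 muc] by auto
    have N1: "real (n1 k) \<ge> 4" using n1[of k] by simp
    have N2: "real (n2 k) \<ge> 4" using n2[of k] by simp
    have kA: "k1 k = 2 * (mat_trace (Sg1 k * Sg1 k) / (real (n1 k) * (real (n1 k) - 1))
        + mat_trace (Sg2 k * Sg2 k) / (real (n2 k) * (real (n2 k) - 1)))
        + 4 * mat_trace (Sg1 k * Sg2 k) / (real (n1 k) * real (n2 k))"
      unfolding k1_def K1_def Sg1_def Sg2_def ..
    have kB: "k2 k = 4 * (mu k \<bullet> (Sg1 k *\<^sub>v mu k) / real (n1 k) + mu k \<bullet> (Sg2 k *\<^sub>v mu k) / real (n2 k))"
      unfolding k2_def K2_def Sg1_def Sg2_def mu_def ..
    have ddk: "dd k = mu k \<bullet> mu k" unfolding dd_def Delta_def mu_def ..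
    note KI = key_ineq[OF a b c N1 N2 D q1 q2 kA kB]
    have r1nn: "r1 k \<ge> 0" unfolding r1_def using a by simp
    have r2nn: "r2 k \<ge> 0" unfolding r2_def using b by simp
    have sqi: "(k2 k / k1 k)^2 \<le> 16 * (r1 k + r2 k) * ((dd k)^2 / k1 k)"
      unfolding r1_def r2_def ddk by (rule KI(3))
    show ?thesis using KI(1) KI(2) sqi r1nn r2nn by blast
  qed
  have "limsup (\<lambda>k. ereal ((dd k)\<^sup>2 / k1 k)) \<noteq> \<infinity>"
    using limsup_fin unfolding dd_def k1_def by simp
  then obtain N :: nat where N: "limsup (\<lambda>k. ereal ((dd k)\<^sup>2 / k1 k)) < ereal (real N)"
    unfolding less_PInf_Ex_of_nat by blast
  have evN: "eventually (\<lambda>k. (dd k)\<^sup>2 / k1 k < real N) sequentially"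
    using Limsup_lessD[OF N] by simp
  define g where "g k = k2 k / k1 k" for k
  have r1lim: "r1 \<longlonglongrightarrow> 0" using lam1 unfolding r1_def Sg1_def .
  have r2lim: "r2 \<longlonglongrightarrow> 0" using lam2 unfolding r2_def Sg2_def .
  have hlim: "(\<lambda>k. 16 * (r1 k + r2 k) * real N) \<longlonglongrightarrow> 0"
    using tendsto_mult_right[OF tendsto_mult_left[OF tendsto_add[OF r1lim r2lim], of 16], of "real N"] by simp
  have ev1: "eventually (\<lambda>k. 0 \<le> (g k)^2) sequentially" by simp
  have ev2: "eventually (\<lambda>k. (g k)^2 \<le> 16 * (r1 k + r2 k) * real N) sequentially"
    using evN
  proof eventually_elim
    case (elim k)
    have "(g k)^2 \<le> 16 * (r1 k + r2 k) * ((dd k)^2 / k1 k)" using per_k[of k] unfolding g_def by blast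
    also have "\<dots> \<le> 16 * (r1 k + r2 k) * real N"
      using elim per_k[of k] by (intro mult_left_mono) auto
    finally show ?case .
  qed
  have g2: "(\<lambda>k. (g k)^2) \<longlonglongrightarrow> 0"
    by (rule tendsto_sandwich[OF ev1 ev2 tendsto_const hlim])
  have "(\<lambda>k. sqrt ((g k)^2)) \<longlonglongrightarrow> sqrt 0" by (rule tendsto_real_sqrt[OF g2])
  moreover have "sqrt ((g k)^2) = g k" for k
  proof -
    have "0 \<le> g k" using per_k[of k] unfolding g_def by blast
    thus ?thesis by simp
  qed
  ultimately have glim: "g \<longlonglongrightarrow> 0" by simp
  have "(\<lambda>k. 1 + g k) \<longlonglongrightarrow> 1 + 0" by (rule tendsto_add[OF tendsto_const glim])
  moreover have "KK (A k) (S1 k) (S2 k) (mu1 k) (mu2 k) (n1 k) (n2 k) / K1 (A k) (S1 k) (S2 k) (n1 k) (n2 k) = 1 + g k" for k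
    using per_k[of k] unfolding g_def KK_def k1_def k2_def by (simp add: add_divide_distrib)
  ultimately show ?thesis by simp
qed

end
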